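(* Let $Z$ be a $d\times d$ complex matrix which is not normal, i.e. $[Z,Z^\dagger]\neq 0$. Define the $2d\times 2d$ matrix $$Q(Z)=\begin{pmatrix}\mathbb 1 & Z\\ Z^\dagger & Z^\dagger Z\end{pmatrix},$$ viewed as an operator on $\mathbb C^d\otimes\mathbb C^2$. Then $Q(Z)$ is positive semidefinite and (after normalization) is an entangled, i.e. non-separable, state on $\mathbb C^d\otimes\mathbb C^2$.
   Context: A positive semidefinite operator on a bipartite space is separable if it is a nonnegative combination of tensor products of positive semidefinite operators; otherwise it is entangled. *)

theory Defs
  imports "HOL-Analysis.Analysis"
begin

text \<open>Complex square matrices are elements of complex^'n^'n (rows indexed by 'n).
  The space C^d is indexed by a finite type 'd, C^2 by bool, so C^d (x) C^2 is
  indexed by 'd \<times> bool.\<close>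

definition adj :: "complex^'n^'m \<Rightarrow> complex^'m^'n" where
  "adj A = (\<chi> i j. cnj (A $ j $ i))"

definition normal_mat :: "complex^'n^'n \<Rightarrow> bool" where
  "normal_mat A \<longleftrightarrow> A ** adj A = adj A ** A"

definition psd :: "complex^'n^'n \<Rightarrow> bool" where
  "psd M \<longleftrightarrow> (\<forall>x::complex^'n.
      (\<Sum>i\<in>UNIV. \<Sum>j\<in>UNIV. cnj (x $ i) * M $ i $ j * x $ j) \<in> \<real> \<and>
      0 \<le> Re (\<Sum>i\<in>UNIV. \<Sum>j\<in>UNIV. cnj (x $ i) * M $ i $ j * x $ j))"

definition tensor :: "complex^'a^'a \<Rightarrow> complex^'b^'b \<Rightarrow> complex^('a::finite \<times> 'b::finite)^('a \<times> 'b)" where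
  "tensor A B = (\<chi> p q. A $ fst p $ fst q * B $ snd p $ snd q)"

definition separable :: "complex^('a::finite \<times> 'b::finite)^('a \<times> 'b) \<Rightarrow> bool" where
  "separable M \<longleftrightarrow> psd M \<and>
     (\<exists>(n::nat) (c::nat \<Rightarrow> real) (A::nat \<Rightarrow> complex^'a^'a) (B::nat \<Rightarrow> complex^'b^'b).
        (\<forall>k<n. 0 \<le> c k \<and> psd (A k) \<and> psd (B k)) \<and>
        M = (\<Sum>k<n. c k *\<^sub>R tensor (A k) (B k)))"

definition entangled :: "complex^('a::finite \<times> 'b::finite)^('a \<times> 'b) \<Rightarrow> bool" where
  "entangled M \<longleftrightarrow> psd M \<and> \<not> separable M"

text \<open>Q(Z) = [[1, Z], [Z^dagger, Z^dagger Z]] in 2x2 block form; the block index is the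
  bool component (False = first block), the index inside a block is the 'd component.\<close>
definition Qmat :: "complex^'d^'d \<Rightarrow> complex^('d \<times> bool)^('d \<times> bool)" where
  "Qmat Z = (\<chi> p q.
     (if \<not> snd p \<and> \<not> snd q then mat 1
      else if \<not> snd p \<and> snd q then Z
      else if snd p \<and> \<not> snd q then adj Z
      else adj Z ** Z) $ fst p $ fst q)"

definition normalize_state :: "complex^'n^'n \<Rightarrow> complex^'n^'n" where
  "normalize_state M = (\<chi> i j. M $ i $ j / trace M)"

end

theory Submission
  imports Defs
begin



definition ip :: "complex^'n \<Rightarrow> complex^'n \<Rightarrow> complex" where
  "ip x y = (\<Sum>i\<in>UNIV. cnj (x$i) * y$i)"

definition qf :: "complex^'n^'n \<Rightarrow> complex^'n \<Rightarrow> complex" where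
  "qf M x = (\<Sum>i\<in>UNIV. \<Sum>j\<in>UNIV. cnj (x $ i) * M $ i $ j * x $ j)"

lemma psd_qf: "psd M \<longleftrightarrow> (\<forall>x. qf M x \<in> \<real> \<and> 0 \<le> Re (qf M x))"
  by (simp add: psd_def qf_def)

lemma qf_ip: "qf M x = ip x (M *v x)"
  by (simp add: qf_def ip_def matrix_vector_mult_def sum_distrib_left mult.assoc)

lemma ip_adj: "ip x (A *v y) = ip (adj A *v x) y"
proof -
  have "ip x (A *v y) = (\<Sum>i\<in>UNIV. \<Sum>j\<in>UNIV. cnj (x$i) * A$i$j * y$j)"
    by (simp add: ip_def matrix_vector_mult_def sum_distrib_left mult.assoc)
  also have "\<dots> = (\<Sum>j\<in>UNIV. \<Sum>i\<in>UNIV. cnj (x$i) * A$i$j * y$j)"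
    by (rule sum.swap)
  also have "\<dots> = ip (adj A *v x) y"
    by (simp add: ip_def matrix_vector_mult_def adj_def sum_distrib_right sum_distrib_left mult_ac)
  finally show ?thesis .
qed

lemma adj_adj[simp]: "adj (adj A) = A"
  by (simp add: adj_def vec_eq_iff)

lemma ip_add_right: "ip x (y + z) = ip x y + ip x z"
  by (simp add: ip_def sum.distrib algebra_simps)
lemma ip_add_left: "ip (y + z) x = ip y x + ip z x"
  by (simp add: ip_def sum.distrib algebra_simps)
lemma ip_neg_left: "ip (- y) x = - ip y x"
  by (simp add: ip_def sum_negf)
lemma ip_zero_right: "ip x 0 = 0"
  by (simp add: ip_def)

lemma ip_self: "ip w w \<in> \<real> \<and> 0 \<le> Re (ip w w)"
proof -
  have "ip w w = of_real (\<Sum>i\<in>UNIV. (Re (w$i))^2 + (Im (w$i))^2)"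
    by (simp add: ip_def complex_mult_cnj mult.commute)
  then show ?thesis by (simp add: sum_nonneg)
qed

lemma sum_pair_bool: "(\<Sum>p\<in>(UNIV::('a::finite\<times>bool) set). f p) = (\<Sum>a\<in>UNIV. f (a,False)) + (\<Sum>a\<in>UNIV. f (a,True))"
proof -
  have "(\<Sum>p\<in>(UNIV::('a\<times>bool) set). f p) = (\<Sum>p\<in>(UNIV\<times>UNIV). f p)" by simp
  also have "\<dots> = (\<Sum>a\<in>UNIV. \<Sum>b\<in>UNIV. f (a,b))" by (simp add: sum.cartesian_product split_def)
  also have "\<dots> = (\<Sum>a\<in>UNIV. f (a,False) + f (a,True))" by (simp add: UNIV_bool)
  finally show ?thesis by (simp add: sum.distrib)
qed

definition fstv :: "complex^('d::finite\<times>bool) \<Rightarrow> complex^'d" where "fstv x = (\<chi> a. x $ (a,False))"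
definition sndv :: "complex^('d::finite\<times>bool) \<Rightarrow> complex^'d" where "sndv x = (\<chi> a. x $ (a,True))"

lemma ip_pair: "ip x y = ip (fstv x) (fstv y) + ip (sndv x) (sndv y)"
  by (simp add: ip_def sum_pair_bool fstv_def sndv_def)

lemma Q_mv: "fstv (Qmat Z *v x) = fstv x + Z *v sndv x"
  "sndv (Qmat Z *v x) = adj Z *v fstv x + (adj Z ** Z) *v sndv x"
  by (simp_all add: vec_eq_iff fstv_def sndv_def Qmat_def matrix_vector_mult_def sum_pair_bool
     mat_def if_distrib sum.If_cases algebra_simps)

lemma psd_Q: "psd (Qmat Z)"
proof -
  have "qf (Qmat Z) x \<in> \<real> \<and> 0 \<le> Re (qf (Qmat Z) x)" for x
  proof -
    define w where "w = fstv x + Z *v sndv x"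
    have "qf (Qmat Z) x = ip (fstv x) w + ip (sndv x) (adj Z *v w)"
      by (simp add: qf_ip ip_pair Q_mv w_def matrix_vector_mul_assoc[symmetric] matrix_vector_right_distrib)
    also have "\<dots> = ip w w"
      by (simp add: ip_adj w_def ip_add_left)
    finally show ?thesis using ip_self by simp
  qed
  then show ?thesis by (simp add: psd_qf)
qed




lemma adj_mult: "adj (A ** B) = adj B ** adj A"
  by (simp add: adj_def matrix_matrix_mult_def vec_eq_iff mult.commute)
lemma adj_diff: "adj (A - B) = adj A - adj B"
  by (simp add: adj_def vec_eq_iff)

lemma ip_axis_left: "ip (axis i a) y = cnj a * y $ i"
proof -
  have "ip (axis i a) y = (\<Sum>k\<in>UNIV. if k = i then cnj a * y$k else 0)"
    unfolding ip_def by (rule sum.cong) (auto simp: axis_def)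
  then show ?thesis by simp
qed

lemma mv_axis: "(H *v axis j b) $ i = H$i$j * b"
proof -
  have "(H *v axis j b) $ i = (\<Sum>k\<in>UNIV. if k = j then H$i$j * b else 0)"
    unfolding matrix_vector_mult_def by (simp only: vec_lambda_beta, rule sum.cong) (auto simp: axis_def)
  then show ?thesis by simp
qed

lemma ip_axis: "ip (axis i a) (H *v axis j b) = cnj a * H$i$j * b"
  by (simp add: ip_axis_left mv_axis)

lemma mv_add: "H *v (x + y) = H *v x + H *v y"
  by (simp add: matrix_vector_right_distrib)

lemma herm_zero:
  fixes H :: "complex^'n^'n"
  assumes h: "adj H = H" and tr: "trace H = 0" and pos: "\<And>v. 0 \<le> Re (ip v (H *v v))"
  shows "H = 0"
proof -
  have adjH: "adj H $ i $ j = cnj (H $ j $ i)" for i j by (simp add: adj_def)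
  have offd: "H$j$i = cnj (H$i$j)" for i j
    using adjH[of j i] h by simp
  have diag_real: "cnj (H$i$i) = H$i$i" for i
    using offd[of i i] by simp
  have dpos: "0 \<le> Re (H$i$i)" for i
    using pos[of "axis i 1"] unfolding ip_axis by simp
  have "Re (trace H) = (\<Sum>i\<in>UNIV. Re (H$i$i))" by (simp add: trace_def)
  then have "(\<Sum>i\<in>UNIV. Re (H$i$i)) = 0" using tr by simp
  then have "\<forall>i\<in>UNIV. Re (H$i$i) = 0" using dpos by (simp add: sum_nonneg_eq_0_iff)
  then have d0: "H$i$i = 0" for i using diag_real[of i]
    by (simp add: complex_eq_iff)
  have "H$i$j = 0" for i j
  proof (cases "i = j")
    case True then show ?thesis using d0 by simp
  next
    case False
    define g where "g = H$i$j"
    define v where "v = axis i (1::complex) + axis j (- cnj g)"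
    have "ip v (H *v v) = cnj 1 * H$i$i * 1 + cnj 1 * H$i$j * (- cnj g)
        + cnj (- cnj g) * H$j$i * 1 + cnj (- cnj g) * H$j$j * (- cnj g)"
      by (simp add: v_def mv_add ip_add_left ip_add_right ip_axis del: mult_minus_left mult_minus_right)
    also have "\<dots> = - 2 * (g * cnj g)" using d0 offd[of i j] by (simp add: g_def)
    finally have "Re (ip v (H *v v)) = - 2 * (Re g ^2 + Im g ^2)"
      by (simp add: complex_mult_cnj)
    moreover have "0 \<le> Re g ^2 + Im g ^2" by simp
    ultimately have "Re g ^2 + Im g ^2 = 0" using pos[of v] by (smt (verit))
    then show ?thesis by (simp add: g_def complex_eq_iff)
  qed
  then show ?thesis by (simp add: vec_eq_iff)
qed

lemma nonnormal_witness:
  assumes "\<not> normal_mat Z"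
  shows "\<exists>v. Re (ip v ((adj Z ** Z - Z ** adj Z) *v v)) < 0"
proof (rule ccontr)
  assume "\<not> ?thesis"
  then have pos: "\<And>v. 0 \<le> Re (ip v ((adj Z ** Z - Z ** adj Z) *v v))" by (simp add: not_less)
  have "adj Z ** Z - Z ** adj Z = 0"
    by (rule herm_zero[OF _ _ pos]) (simp_all add: adj_diff adj_mult trace_sub trace_mul_sym[of Z])
  then show False using assms by (simp add: normal_mat_def)
qed




lemma L2:
  fixes a c g h :: complex
  assumes V: "\<And>s t. (cnj s * s * a + cnj s * t * g + cnj t * s * h + cnj t * t * c) \<in> \<real> \<and>
          0 \<le> Re (cnj s * s * a + cnj s * t * g + cnj t * s * h + cnj t * t * c)"
  shows "a = of_real (Re a) \<and> c = of_real (Re c) \<and> 0 \<le> Re a \<and> 0 \<le> Re c \<and> h = cnj g \<and>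
         (Re g)^2 + (Im g)^2 \<le> Re a * Re c"
proof -
  have A: "a \<in> \<real>" "0 \<le> Re a" using V[of 1 0] by simp_all
  have C: "c \<in> \<real>" "0 \<le> Re c" using V[of 0 1] by simp_all
  have a: "a = of_real (Re a)" using A by (simp add: complex_eq_iff Reals_cases complex_is_Real_iff)
  have c: "c = of_real (Re c)" using C by (simp add: complex_eq_iff complex_is_Real_iff)
  have ia: "Im a = 0" "Im c = 0" using A(1) C(1) by (simp_all add: complex_is_Real_iff)
  have 1: "Im g + Im h = 0" using V[of 1 1] ia by (simp add: complex_is_Real_iff)
  have 2: "Re g - Re h = 0" using V[of 1 \<i>] ia by (simp add: complex_is_Real_iff)
  have h: "h = cnj g" using 1 2 by (simp add: complex_eq_iff)
  define n where "n = (Re g)^2 + (Im g)^2"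
  have n0: "0 \<le> n" by (simp add: n_def)
  have key: "0 \<le> l^2 * n * Re a + Re c - 2 * l * n" for l :: real
  proof -
    have "Re (cnj (- (of_real l * g)) * (- (of_real l * g)) * a + cnj (- (of_real l * g)) * 1 * g
       + cnj 1 * (- (of_real l * g)) * h + cnj 1 * 1 * c) = l^2 * n * Re a + Re c - 2 * l * n"
      by (subst a, subst c, simp add: h n_def algebra_simps power2_eq_square)
    then show ?thesis using V[of "- (of_real l * g)" 1] by simp
  qed
  have "n \<le> Re a * Re c"
  proof (cases "n = 0")
    case True then show ?thesis using A C by simp
  next
    case False
    then have np: "n > 0" using n0 by simp
    show ?thesis
    proof (cases "Re a = 0")
      case True
      have "0 \<le> ((Re c + 1)/(2*n))^2 * n * Re a + Re c - 2 * ((Re c + 1)/(2*n)) * n" by (rule key)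
      with True np show ?thesis by (simp add: field_simps)
    next
      case False
      then have ap: "Re a > 0" using A by simp
      have "0 \<le> (1/Re a)^2 * n * Re a + Re c - 2 * (1/Re a) * n" by (rule key)
      then have "0 \<le> n / Re a + Re c - 2 * n / Re a" using ap by (simp add: power2_eq_square field_simps)
      then have "n / Re a \<le> Re c" by simp
      then show ?thesis using ap by (simp add: field_simps mult.commute)
    qed
  qed
  then show ?thesis using a c A C h by (simp add: n_def)
qed

lemma cs2: fixes a b c d :: real shows "(a*c + b*d)^2 \<le> (a^2+b^2)*(c^2+d^2)"
proof -
  have "(a^2+b^2)*(c^2+d^2) - (a*c + b*d)^2 = (a*d - b*c)^2" by (simp add: power2_eq_square algebra_simps)
  then show ?thesis by (smt (verit) zero_le_power2)
qed
lemma amgm: fixes x y :: real shows "4*(x*y) \<le> (x+y)^2"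
proof -
  have "(x+y)^2 - 4*(x*y) = (x-y)^2" by (simp add: power2_eq_square algebra_simps)
  then show ?thesis by (smt (verit) zero_le_power2)
qed

lemma L3:
  fixes a c g p r q :: complex
  assumes "0 \<le> Re a" "0 \<le> Re c" "0 \<le> Re p" "0 \<le> Re r"
    "Im a = 0" "Im c = 0" "Im p = 0" "Im r = 0"
    "(Re g)^2 + (Im g)^2 \<le> Re a * Re c" "(Re q)^2 + (Im q)^2 \<le> Re p * Re r"
  shows "0 \<le> Re (p * a + cnj q * g + q * cnj g + r * c)"
proof -
  define X where "X = Re q * Re g + Im q * Im g"
  have e: "Re (p * a + cnj q * g + q * cnj g + r * c) = Re p * Re a + Re r * Re c + 2 * X"
    using assms by (simp add: X_def algebra_simps)
  have cs: "X^2 \<le> ((Re q)^2 + (Im q)^2) * ((Re g)^2 + (Im g)^2)"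
    unfolding X_def by (rule cs2)
  have "((Re q)^2 + (Im q)^2) * ((Re g)^2 + (Im g)^2) \<le> (Re p * Re r) * (Re a * Re c)"
    using assms by (intro mult_mono) auto
  also have "\<dots> = (Re p * Re a) * (Re r * Re c)" by simp
  finally have "4 * X^2 \<le> (Re p * Re a + Re r * Re c)^2"
    using cs amgm[of "Re p * Re a" "Re r * Re c"] by linarith
  then have "(2*X)^2 \<le> (Re p * Re a + Re r * Re c)^2" by (simp add: power_mult_distrib)
  moreover have "0 \<le> Re p * Re a + Re r * Re c" using assms by simp
  ultimately have "\<bar>2*X\<bar> \<le> Re p * Re a + Re r * Re c"
    using power2_le_imp_le[of "\<bar>2*X\<bar>"] by simp
  then show ?thesis using e by linarith
qed




definition PT :: "complex^('a::finite\<times>bool)^('a\<times>bool) \<Rightarrow> complex^('a\<times>bool)^('a\<times>bool)" where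
  "PT M = (\<chi> p q. M $ (fst p, snd q) $ (fst q, snd p))"

definition gA :: "complex^'a^'a \<Rightarrow> complex^'a \<Rightarrow> complex^'a \<Rightarrow> complex" where
  "gA A u w = (\<Sum>a\<in>UNIV. \<Sum>a'\<in>UNIV. cnj (u$a) * A$a$a' * w$a')"

lemma E1: "qf (PT (tensor A B)) x = B$False$False * gA A (fstv x) (fstv x) + B$True$False * gA A (fstv x) (sndv x)
   + B$False$True * gA A (sndv x) (fstv x) + B$True$True * gA A (sndv x) (sndv x)"
  unfolding qf_def PT_def tensor_def gA_def fstv_def sndv_def
  by (simp add: sum_pair_bool sum.distrib sum_distrib_left mult_ac)

lemma E2: "qf A (\<chi> a. s * u$a + t * w$a) = cnj s * s * gA A u u + cnj s * t * gA A u w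
   + cnj t * s * gA A w u + cnj t * t * gA A w w"
  unfolding qf_def gA_def
  by (simp add: sum.distrib sum_distrib_left algebra_simps)

lemma E3: "qf (B::complex^bool^bool) (\<chi> b. if b then t else s) = cnj s * s * B$False$False + cnj s * t * B$False$True
   + cnj t * s * B$True$False + cnj t * t * B$True$True"
  unfolding qf_def by (simp add: UNIV_bool algebra_simps)

lemma PT_pos:
  assumes A: "psd A" and B: "psd (B::complex^bool^bool)"
  shows "0 \<le> Re (qf (PT (tensor A B)) x)"
proof -
  define u where "u = fstv x"
  define w where "w = sndv x"
  have G: "(cnj s * s * gA A u u + cnj s * t * gA A u w + cnj t * s * gA A w u + cnj t * t * gA A w w) \<in> \<real> \<and>
          0 \<le> Re (cnj s * s * gA A u u + cnj s * t * gA A u w + cnj t * s * gA A w u + cnj t * t * gA A w w)" for s t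
  proof -
    have "qf A (\<chi> a. s * u$a + t * w$a) \<in> \<real> \<and> 0 \<le> Re (qf A (\<chi> a. s * u$a + t * w$a))"
      using A unfolding psd_qf by (rule spec)
    then show ?thesis by (simp only: E2)
  qed
  have Bv: "(cnj s * s * B$False$False + cnj s * t * B$False$True + cnj t * s * B$True$False + cnj t * t * B$True$True) \<in> \<real> \<and>
          0 \<le> Re (cnj s * s * B$False$False + cnj s * t * B$False$True + cnj t * s * B$True$False + cnj t * t * B$True$True)" for s t
  proof -
    have "qf B (\<chi> b. if b then t else s) \<in> \<real> \<and> 0 \<le> Re (qf B (\<chi> b. if b then t else s))"
      using B unfolding psd_qf by (rule spec)
    then show ?thesis by (simp only: E3)
  qed
  note g = L2[OF G]
  note b = L2[OF Bv]
  have im1: "Im (gA A u u) = 0" using g by (metis Im_complex_of_real)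
  have im2: "Im (gA A w w) = 0" using g by (metis Im_complex_of_real)
  have im3: "Im (B$False$False) = 0" using b by (metis Im_complex_of_real)
  have im4: "Im (B$True$True) = 0" using b by (metis Im_complex_of_real)
  have e: "qf (PT (tensor A B)) x = B$False$False * gA A u u + cnj (B$False$True) * gA A u w
     + B$False$True * cnj (gA A u w) + B$True$True * gA A w w"
  proof -
    have "B$True$False = cnj (B$False$True)" "gA A w u = cnj (gA A u w)" using g b by simp_all
    then show ?thesis unfolding E1 u_def[symmetric] w_def[symmetric] by simp
  qed
  have "0 \<le> Re (B$False$False * gA A u u + cnj (B$False$True) * gA A u w
     + B$False$True * cnj (gA A u w) + B$True$True * gA A w w)"
    by (rule L3) (use g b im1 im2 im3 im4 in auto)
  then show ?thesis using e by simp
qed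

lemma PT_add: "PT (M + N) = PT M + PT N" by (simp add: PT_def vec_eq_iff)
lemma PT_scale: "PT (c *\<^sub>R M) = c *\<^sub>R PT M" by (simp add: PT_def vec_eq_iff)
lemma PT_zero: "PT 0 = 0" by (simp add: PT_def vec_eq_iff)
lemma qf_add: "qf (M + N) x = qf M x + qf N x" by (simp add: qf_def sum.distrib algebra_simps)
lemma qf_scale: "qf (c *\<^sub>R M) x = of_real c * qf M x"
proof -
  have "(c *\<^sub>R M) $ i $ j = of_real c * M $ i $ j" for i j
    by (simp only: vector_scaleR_component) (simp add: scaleR_conv_of_real)
  then show ?thesis by (simp add: qf_def sum_distrib_left mult_ac)
qed
lemma qf_zero: "qf 0 x = 0" by (simp add: qf_def)

lemma qf_PT_sum: fixes n :: nat shows "qf (PT (\<Sum>k<n. c k *\<^sub>R M k)) x = (\<Sum>k<n. of_real (c k) * qf (PT (M k)) x)"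
  by (induction n) (simp_all add: PT_zero qf_zero PT_add PT_scale qf_add qf_scale)

lemma sep_PT:
  assumes "separable M"
  shows "0 \<le> Re (qf (PT M) (x :: complex^('a::finite\<times>bool)))"
proof -
  from assms have "\<exists>(n::nat) (c::nat \<Rightarrow> real) (A::nat \<Rightarrow> complex^'a^'a) (B::nat \<Rightarrow> complex^bool^bool).
        (\<forall>k<n. 0 \<le> c k \<and> psd (A k) \<and> psd (B k)) \<and>
        M = (\<Sum>k<n. c k *\<^sub>R tensor (A k) (B k))" unfolding separable_def by (elim conjE)
  then obtain n c and A :: "nat \<Rightarrow> complex^'a^'a" and B :: "nat \<Rightarrow> complex^bool^bool"
    where h: "\<forall>k<n. 0 \<le> c k \<and> psd (A k) \<and> psd (B k)"
    and M: "M = (\<Sum>k<n. c k *\<^sub>R tensor (A k) (B k))"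
    by (elim exE conjE)
  have "Re (qf (PT M) x) = (\<Sum>k<n. c k * Re (qf (PT (tensor (A k) (B k))) x))"
    unfolding M qf_PT_sum by (simp add: Re_sum)
  also have "\<dots> \<ge> 0"
  proof (intro sum_nonneg)
    fix k assume "k \<in> {..<n}"
    then have c: "0 \<le> c k" and a: "psd (A k)" and b: "psd (B k)" using h by auto
    show "0 \<le> c k * Re (qf (PT (tensor (A k) (B k))) x)" by (rule mult_nonneg_nonneg[OF c PT_pos[OF a b]])
  qed
  finally show ?thesis .
qed

lemma PTQ_mv: "fstv (PT (Qmat Z) *v x) = fstv x + adj Z *v sndv x"
  "sndv (PT (Qmat Z) *v x) = Z *v fstv x + (adj Z ** Z) *v sndv x"
  by (simp_all add: vec_eq_iff fstv_def sndv_def PT_def Qmat_def matrix_vector_mult_def sum_pair_bool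
     mat_def if_distrib sum.If_cases algebra_simps)




lemma mv_neg: "(Z::complex^'n^'m) *v (- y) = - (Z *v y)"
  using matrix_vector_mult_diff_distrib[of Z 0 y] by simp

lemma trace_Q: "trace (Qmat Z) = of_real (real CARD('d) + (\<Sum>a\<in>UNIV. \<Sum>c\<in>UNIV. (Re (Z$c$a))^2 + (Im (Z$c$a))^2))"
  for Z :: "complex^'d^'d"
proof -
  have "trace (Qmat Z) = (\<Sum>a\<in>(UNIV::'d set). 1) + (\<Sum>a\<in>UNIV. \<Sum>c\<in>UNIV. cnj (Z$c$a) * Z$c$a)"
    by (simp add: trace_def sum_pair_bool Qmat_def mat_def matrix_matrix_mult_def adj_def)
  also have "\<dots> = of_real (real CARD('d) + (\<Sum>a\<in>UNIV. \<Sum>c\<in>UNIV. (Re (Z$c$a))^2 + (Im (Z$c$a))^2))"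
    by (simp add: mult.commute[of "cnj _"] complex_mult_cnj)
  finally show ?thesis .
qed

theorem mainTheorem2:
  fixes Z :: "complex^'d^'d"
  assumes "\<not> normal_mat Z"
  shows "psd (Qmat Z) \<and> entangled (normalize_state (Qmat Z))"
proof -
  define r where "r = real CARD('d) + (\<Sum>a\<in>UNIV. \<Sum>c\<in>UNIV. (Re (Z$c$a))^2 + (Im (Z$c$a))^2)"
  have r0: "r > 0" unfolding r_def
    by (intro add_pos_nonneg) (simp_all add: sum_nonneg)
  have sc: "((1/r) *\<^sub>R Qmat Z) $ i $ j = Qmat Z $ i $ j / of_real r" for i j
    by (simp only: vector_scaleR_component) (simp add: scaleR_conv_of_real divide_inverse mult.commute of_real_inverse)
  have N: "normalize_state (Qmat Z) = (1/r) *\<^sub>R Qmat Z"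
    unfolding vec_eq_iff sc by (simp add: normalize_state_def trace_Q r_def[symmetric])
  have psdN: "psd (normalize_state (Qmat Z))"
    unfolding N psd_qf qf_scale
  proof
    fix x
    have "qf (Qmat Z) x \<in> \<real> \<and> 0 \<le> Re (qf (Qmat Z) x)" using psd_Q unfolding psd_qf by blast
    then show "complex_of_real (1 / r) * qf (Qmat Z) x \<in> \<real> \<and> 0 \<le> Re (complex_of_real (1 / r) * qf (Qmat Z) x)"
      using r0 by simp
  qed
  obtain v where v: "Re (ip v ((adj Z ** Z - Z ** adj Z) *v v)) < 0"
    using nonnormal_witness[OF assms] by blast
  define x :: "complex^('d\<times>bool)" where "x = (\<chi> p. if snd p then v $ fst p else (- (adj Z *v v)) $ fst p)"
  have fx: "fstv x = - (adj Z *v v)" and sx: "sndv x = v"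
    by (simp_all add: x_def fstv_def sndv_def vec_eq_iff)
  have "qf (PT (Qmat Z)) x = ip v ((adj Z ** Z - Z ** adj Z) *v v)"
    by (simp add: qf_ip ip_pair PTQ_mv fx sx ip_zero_right mv_neg matrix_vector_mul_assoc
        matrix_vector_mult_diff_rdistrib)
  then have neg: "Re (qf (PT (Qmat Z)) x) < 0" using v by simp
  have "\<not> separable (normalize_state (Qmat Z))"
  proof
    assume "separable (normalize_state (Qmat Z))"
    from sep_PT[OF this, of x] have "0 \<le> Re (qf (PT (normalize_state (Qmat Z))) x)" .
    also have "Re (qf (PT (normalize_state (Qmat Z))) x) = (1/r) * Re (qf (PT (Qmat Z)) x)"
      by (simp add: N PT_scale qf_scale)
    finally show False using neg r0 by (simp add: zero_le_divide_iff)
  qed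
  then show ?thesis using psd_Q psdN by (simp add: entangled_def)
qed


end
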